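(* Consider the Axelrod model with $F$ features and $q\ge2$ states on the path with vertex set $\{0,1,\dots,N\}$, started with all initial features i.i.d. uniform on $\{1,\dots,q\}$, and fix a time $t\ge0$. Let $0\le x<y<z\le N$ and $i\in\{1,\dots,F\}$, and for vertices $u,v$ let $\Omega_i(u,v)=\{X_t^i(u)=X_t^i(v)\}$. Then $$P\big(\Omega_i(x,z)\ \big|\ (\Omega_i(x,y)\cup\Omega_i(y,z))^c\big)=\frac{1}{q-1}.$$
   Context: Axelrod model with $F$ features and $q$ states on a graph: process $X_t:V\to\{1,\dots,q\}^F$, $X_t(x)=(X_t^1(x),\dots,X_t^F(x))$; for each ordered pair $(x,y)$ of adjacent vertices with $X(x)\ne X(y)$, at rate $F(x,y)/2$, where $F(x,y)=\frac1F\sum_i\mathbf 1\{X^i(x)=X^i(y)\}$, vertex $x$ copies from $y$ one feature chosen uniformly among those on which they differ. *)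

theory Defs
  imports Complex_Main
begin

text \<open>Axelrod model on the path with vertex set {0..N}, F features (indexed 1..F),
q states (1..q).  A configuration is a function eta :: nat => nat => nat,
eta v j = state of feature j at vertex v; outside the relevant index range it is 0.\<close>

type_synonym config = "nat \<Rightarrow> nat \<Rightarrow> nat"

definition configs :: "nat \<Rightarrow> nat \<Rightarrow> nat \<Rightarrow> config set" where
  "configs N F q = {eta. \<forall>v j. (v \<le> N \<and> 1 \<le> j \<and> j \<le> F \<longrightarrow> eta v j \<in> {1..q})
                              \<and> (\<not> (v \<le> N \<and> 1 \<le> j \<and> j \<le> F) \<longrightarrow> eta v j = 0)}"

definition path_pairs :: "nat \<Rightarrow> (nat \<times> nat) set" where
  "path_pairs N = {(u, v). u \<le> N \<and> v \<le> N \<and> (v = u + 1 \<or> u = v + 1)}"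

definition diff_feats :: "nat \<Rightarrow> config \<Rightarrow> nat \<Rightarrow> nat \<Rightarrow> nat set" where
  "diff_feats F eta u v = {j \<in> {1..F}. eta u j \<noteq> eta v j}"

definition similarity :: "nat \<Rightarrow> config \<Rightarrow> nat \<Rightarrow> nat \<Rightarrow> real" where
  "similarity F eta u v = real (card {j \<in> {1..F}. eta u j = eta v j}) / real F"

text \<open>Generator matrix: for each ordered adjacent pair (u,v) with differing
cultures, at rate similarity/2, u copies from v a feature chosen uniformly among
the differing ones.  Q eta xi is the rate eta -> xi for xi \<noteq> eta, and the
diagonal entry is minus the total jump rate.\<close>
definition axelrod_gen :: "nat \<Rightarrow> nat \<Rightarrow> config \<Rightarrow> config \<Rightarrow> real" where
  "axelrod_gen N F eta xi =
     (\<Sum>(u, v) \<in> path_pairs N. \<Sum>j \<in> diff_feats F eta u v.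
        (similarity F eta u v / 2) / real (card (diff_feats F eta u v)) *
        ((if eta(u := (eta u)(j := eta v j)) = xi then 1 else 0)
         - (if eta = xi then 1 else 0)))"

fun gen_pow :: "nat \<Rightarrow> nat \<Rightarrow> nat \<Rightarrow> nat \<Rightarrow> config \<Rightarrow> config \<Rightarrow> real" where
  "gen_pow N F q 0 eta xi = (if eta = xi then 1 else 0)"
| "gen_pow N F q (Suc n) eta xi =
     (\<Sum>zeta \<in> configs N F q. gen_pow N F q n eta zeta * axelrod_gen N F zeta xi)"

definition trans_prob :: "nat \<Rightarrow> nat \<Rightarrow> nat \<Rightarrow> real \<Rightarrow> config \<Rightarrow> config \<Rightarrow> real" where
  "trans_prob N F q t eta xi = (\<Sum>n. t ^ n / fact n * gen_pow N F q n eta xi)"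

text \<open>Law of X_t when the initial features are i.i.d. uniform on {1..q}
(i.e. the initial configuration is uniform on the configuration space).\<close>
definition law_at :: "nat \<Rightarrow> nat \<Rightarrow> nat \<Rightarrow> real \<Rightarrow> config \<Rightarrow> real" where
  "law_at N F q t xi =
     (\<Sum>eta \<in> configs N F q. (1 / real (card (configs N F q))) * trans_prob N F q t eta xi)"

definition prob_at :: "nat \<Rightarrow> nat \<Rightarrow> nat \<Rightarrow> real \<Rightarrow> config set \<Rightarrow> real" where
  "prob_at N F q t A = (\<Sum>xi \<in> configs N F q \<inter> A. law_at N F q t xi)"

definition cond_prob_at :: "nat \<Rightarrow> nat \<Rightarrow> nat \<Rightarrow> real \<Rightarrow> config set \<Rightarrow> config set \<Rightarrow> real" where
  "cond_prob_at N F q t A B = prob_at N F q t (A \<inter> B) / prob_at N F q t B"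

definition Omega :: "nat \<Rightarrow> nat \<Rightarrow> nat \<Rightarrow> config set" where
  "Omega i u v = {eta. eta u i = eta v i}"

end

theory Submission
  imports Defs "HOL-Library.FuncSet"
begin


lemma configs_finite: "finite (configs N F q)"
proof -
  let ?ext = "\<lambda>g::nat\<times>nat\<Rightarrow>nat. \<lambda>v j. if v \<le> N \<and> 1 \<le> j \<and> j \<le> F then g (v,j) else 0"
  have "configs N F q \<subseteq> ?ext ` (PiE ({..N}\<times>{1..F}) (\<lambda>_. {1..q}))"
  proof
    fix eta :: config assume e: "eta \<in> configs N F q"
    let ?g = "restrict (\<lambda>(v,j). eta v j) ({..N}\<times>{1..F})"
    have "?g \<in> PiE ({..N}\<times>{1..F}) (\<lambda>_. {1..q})" using e by (auto simp: configs_def)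
    moreover have "eta = ?ext ?g" using e by (auto simp: configs_def fun_eq_iff)
    ultimately show "eta \<in> ?ext ` (PiE ({..N}\<times>{1..F}) (\<lambda>_. {1..q}))" by blast
  qed
  moreover have "finite (PiE ({..N}\<times>{1..F}) (\<lambda>_. {1..q}))" by (intro finite_PiE) auto
  ultimately show ?thesis using finite_subset by blast
qed

lemma path_pairs_finite: "finite (path_pairs N)"
  by (rule finite_subset[of _ "{..N}\<times>{..N}"]) (auto simp: path_pairs_def)

lemma configs_val: "eta \<in> configs N F q \<Longrightarrow> v \<le> N \<Longrightarrow> 1 \<le> j \<Longrightarrow> j \<le> F \<Longrightarrow> eta v j \<in> {1..q}"
  by (auto simp: configs_def)

lemma configs_out: "eta \<in> configs N F q \<Longrightarrow> \<not> (v \<le> N \<and> 1 \<le> j \<and> j \<le> F) \<Longrightarrow> eta v j = 0"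
  by (auto simp: configs_def)

lemma configs_upd: "eta \<in> configs N F q \<Longrightarrow> u \<le> N \<Longrightarrow> 1 \<le> j \<Longrightarrow> j \<le> F \<Longrightarrow> d \<in> {1..q}
   \<Longrightarrow> eta(u := (eta u)(j := d)) \<in> configs N F q"
  by (auto simp: configs_def)



definition simc :: "nat \<Rightarrow> nat \<Rightarrow> nat \<Rightarrow> nat \<Rightarrow> config \<Rightarrow> config \<Rightarrow> bool" where
  "simc N F q i xi xi' \<longleftrightarrow> xi \<in> configs N F q \<and> xi' \<in> configs N F q
     \<and> (\<forall>v j. j \<noteq> i \<longrightarrow> xi v j = xi' v j)
     \<and> (\<forall>u v. (u,v) \<in> path_pairs N \<longrightarrow> (xi u i = xi v i \<longleftrightarrow> xi' u i = xi' v i))"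

lemma simc_eq_iff:
  assumes "simc N F q i z z'" "(u,v) \<in> path_pairs N"
  shows "z u j = z v j \<longleftrightarrow> z' u j = z' v j"
  using assms unfolding simc_def by (cases "j = i") auto

lemma simc_agree:
  assumes "simc N F q i z z'" "(u,v) \<in> path_pairs N"
  shows "diff_feats F z u v = diff_feats F z' u v"
    and "similarity F z u v = similarity F z' u v"
  using simc_eq_iff[OF assms] unfolding diff_feats_def similarity_def by auto

definition wt :: "nat \<Rightarrow> config \<Rightarrow> nat \<Rightarrow> nat \<Rightarrow> real" where
  "wt F z u v = similarity F z u v / 2 / real (card (diff_feats F z u v))"

lemma wt_agree:
  assumes "simc N F q i z z'" "(u,v) \<in> path_pairs N"
  shows "wt F z u v = wt F z' u v"
  using simc_agree[OF assms] by (simp add: wt_def)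

lemma Q_expand:
  "axelrod_gen N F z xi = (\<Sum>(u,v)\<in>path_pairs N. \<Sum>j\<in>{1..F}.
      (if j \<in> diff_feats F z u v then wt F z u v *
        ((if z(u := (z u)(j := z v j)) = xi then 1 else 0) - (if z = xi then 1 else 0)) else 0))"
  unfolding axelrod_gen_def
proof (rule sum.cong[OF refl], clarify)
  fix u v
  show "(\<Sum>j\<in>diff_feats F z u v. similarity F z u v / 2 / real (card (diff_feats F z u v)) *
          ((if z(u := (z u)(j := z v j)) = xi then 1 else 0) - (if z = xi then 1 else 0))) =
        (\<Sum>j\<in>{1..F}. (if j \<in> diff_feats F z u v then wt F z u v *
          ((if z(u := (z u)(j := z v j)) = xi then 1 else 0) - (if z = xi then 1 else 0)) else 0))" (is "_ = ?rhs")
  proof -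
    have fin: "finite {1..F}" by simp
    have "(\<Sum>j\<in>diff_feats F z u v. similarity F z u v / 2 / real (card (diff_feats F z u v)) *
          ((if z(u := (z u)(j := z v j)) = xi then 1 else 0) - (if z = xi then 1 else 0)))
       = (\<Sum>j\<in>{1..F}. if z u j \<noteq> z v j then similarity F z u v / 2 / real (card (diff_feats F z u v)) *
          ((if z(u := (z u)(j := z v j)) = xi then 1 else 0) - (if z = xi then 1 else 0)) else 0)"
      unfolding diff_feats_def[of F z u v, symmetric] by (subst diff_feats_def) (rule sum.inter_filter[OF fin])
    also have "\<dots> = ?rhs" by (rule sum.cong) (auto simp: diff_feats_def wt_def)
    finally show ?thesis .
  qed
qed

lemma T_expand:
  "(\<Sum>z\<in>configs N F q. f z * axelrod_gen N F z xi) =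
   (\<Sum>(u,v)\<in>path_pairs N. \<Sum>j\<in>{1..F}. \<Sum>z\<in>configs N F q. f z *
      (if j \<in> diff_feats F z u v then wt F z u v *
        ((if z(u := (z u)(j := z v j)) = xi then 1 else 0) - (if z = xi then 1 else 0)) else 0))"
  unfolding Q_expand sum_distrib_left
  apply (subst sum.swap)
  apply (rule sum.cong[OF refl])
  apply clarify
  apply (subst sum.swap)
  apply (simp add: sum_distrib_left)
  done

lemma inner_split:
  assumes "xi \<in> configs N F q"
  shows "(\<Sum>z\<in>configs N F q. f z *
      (if j \<in> diff_feats F z u v then wt F z u v *
        ((if z(u := (z u)(j := z v j)) = xi then 1 else 0) - (if z = xi then 1 else 0)) else 0))
   = (\<Sum>z\<in>configs N F q. (if j \<in> diff_feats F z u v \<and> z(u := (z u)(j := z v j)) = xi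
          then f z * wt F z u v else 0))
     - (if j \<in> diff_feats F xi u v then f xi * wt F xi u v else 0)"
proof -
  have "(\<Sum>z\<in>configs N F q. f z *
      (if j \<in> diff_feats F z u v then wt F z u v *
        ((if z(u := (z u)(j := z v j)) = xi then 1 else 0) - (if z = xi then 1 else 0)) else 0))
   = (\<Sum>z\<in>configs N F q. (if j \<in> diff_feats F z u v \<and> z(u := (z u)(j := z v j)) = xi
          then f z * wt F z u v else 0) - (if z = xi then (if j \<in> diff_feats F z u v then f z * wt F z u v else 0) else 0))"
    by (rule sum.cong) (auto simp: algebra_simps)
  also have "\<dots> = (\<Sum>z\<in>configs N F q. (if j \<in> diff_feats F z u v \<and> z(u := (z u)(j := z v j)) = xi
          then f z * wt F z u v else 0)) - (\<Sum>z\<in>configs N F q. (if z = xi then (if j \<in> diff_feats F z u v then f z * wt F z u v else 0) else 0))"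
    by (rule sum_subtractf)
  also have "(\<Sum>z\<in>configs N F q. (if z = xi then (if j \<in> diff_feats F z u v then f z * wt F z u v else 0) else 0))
      = (if j \<in> diff_feats F xi u v then f xi * wt F xi u v else 0)"
    using assms configs_finite by (simp add: sum.delta)
  finally show ?thesis .
qed



lemma pp_facts: "(u,v) \<in> path_pairs N \<Longrightarrow> u \<le> N \<and> v \<le> N \<and> u \<noteq> v"
  by (auto simp: path_pairs_def)

lemma charW:
  assumes xi: "xi \<in> configs N F q" and p: "(u,v) \<in> path_pairs N" and j: "j \<in> {1..F}"
  shows "(\<Sum>z\<in>configs N F q. (if j \<in> diff_feats F z u v \<and> z(u := (z u)(j := z v j)) = xi
          then g z else 0))
    = (if xi u j = xi v j then (\<Sum>d\<in>{1..q}-{xi v j}. g (xi(u := (xi u)(j := d)))) else 0)"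
proof -
  have uv: "u \<le> N" "v \<le> N" "u \<noteq> v" using pp_facts[OF p] by auto
  have "(\<Sum>z\<in>configs N F q. (if j \<in> diff_feats F z u v \<and> z(u := (z u)(j := z v j)) = xi
          then g z else 0)) = sum g {z \<in> configs N F q. j \<in> diff_feats F z u v \<and> z(u := (z u)(j := z v j)) = xi}"
    using configs_finite by (simp add: sum.inter_filter)
  also have "\<dots> = (if xi u j = xi v j then (\<Sum>d\<in>{1..q}-{xi v j}. g (xi(u := (xi u)(j := d)))) else 0)"
  proof (cases "xi u j = xi v j")
    case True
    have S: "{z \<in> configs N F q. j \<in> diff_feats F z u v \<and> z(u := (z u)(j := z v j)) = xi}
         = (\<lambda>d. xi(u := (xi u)(j := d))) ` ({1..q}-{xi v j})"
    proof (intro equalityI subsetI)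
      fix z assume z: "z \<in> {z \<in> configs N F q. j \<in> diff_feats F z u v \<and> z(u := (z u)(j := z v j)) = xi}"
      hence zc: "z \<in> configs N F q" and zd: "j \<in> diff_feats F z u v" and zu: "z(u := (z u)(j := z v j)) = xi" by auto
      have zv: "z v j = xi v j" using zu uv by (metis fun_upd_other)
      have zeq: "z = xi(u := (xi u)(j := z u j))"
        using zu by (auto simp: fun_eq_iff split: if_splits)
      have a1: "z u j \<in> {1..q}" using configs_val[OF zc uv(1)] j by auto
      have a2: "z u j \<noteq> xi v j" using zd zv by (auto simp: diff_feats_def)
      show "z \<in> (\<lambda>d. xi(u := (xi u)(j := d))) ` ({1..q}-{xi v j})"
        by (rule image_eqI[where x="z u j"]) (use zeq a1 a2 in auto)
    next
      fix z assume "z \<in> (\<lambda>d. xi(u := (xi u)(j := d))) ` ({1..q}-{xi v j})"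
      then obtain d where d0: "d \<in> {1..q}-{xi v j}" and zd: "z = xi(u := (xi u)(j := d))" by blast
      have d: "d \<in> {1..q}" "d \<noteq> xi v j" using d0 by auto
      have "z \<in> configs N F q" using zd configs_upd[OF xi uv(1), of j d] j d by auto
      moreover have "j \<in> diff_feats F z u v" using zd d j uv by (auto simp: diff_feats_def)
      moreover have "z(u := (z u)(j := z v j)) = xi" using zd uv True by (auto simp: fun_eq_iff)
      ultimately show "z \<in> {z \<in> configs N F q. j \<in> diff_feats F z u v \<and> z(u := (z u)(j := z v j)) = xi}" by auto
    qed
    have inj: "inj_on (\<lambda>d. xi(u := (xi u)(j := d))) ({1..q}-{xi v j})"
      by (rule inj_onI) (metis fun_upd_same)
    show ?thesis using True unfolding S by (subst sum.reindex[OF inj]) (simp add: comp_def)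
  next
    case False
    have "{z \<in> configs N F q. j \<in> diff_feats F z u v \<and> z(u := (z u)(j := z v j)) = xi} = {}"
    proof (rule ccontr)
      assume "\<not> ?thesis"
      then obtain z where zu: "z(u := (z u)(j := z v j)) = xi" by auto
      have "xi u j = z v j" using zu by (metis fun_upd_same)
      moreover have "xi v j = z v j" using zu uv by (metis fun_upd_other)
      ultimately show False using False by simp
    qed
    thus ?thesis using False by (simp only: sum.empty if_False)
  qed
  finally show ?thesis .
qed



definition sw :: "nat \<Rightarrow> nat \<Rightarrow> nat \<Rightarrow> nat" where
  "sw a b d = (if d = a then b else if d = b then a else d)"

lemma sw_inj: "inj (sw a b)"
  by (rule injI) (auto simp: sw_def split: if_splits)

lemma sw_range: "a \<in> S \<Longrightarrow> b \<in> S \<Longrightarrow> d \<in> S \<Longrightarrow> sw a b d \<in> S"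
  by (auto simp: sw_def)

lemma sw_same[simp]: "sw a a d = d"
  by (auto simp: sw_def)

lemma perm_bij:
  assumes "inj p" "\<And>d. d \<in> {1..q} \<Longrightarrow> p d \<in> {1..q}" "p a = b"
  shows "bij_betw p ({1..q::nat}-{a}) ({1..q}-{b})"
proof -
  have "p ` {1..q} = {1..q}"
    by (rule endo_inj_surj) (use assms in \<open>auto intro: inj_on_subset\<close>)
  hence "p ` ({1..q}-{a}) = {1..q}-{b}" using assms(1,3) by (simp add: image_set_diff)
  moreover have "inj_on p ({1..q}-{a})" using assms(1) by (rule inj_on_subset) auto
  ultimately show ?thesis by (simp add: bij_betw_def)
qed

lemma pi_exists:
  assumes s: "simc N F q i xi xi'" and p: "(u,v) \<in> path_pairs N" and j: "j \<in> {1..F}"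
    and e: "xi u j = xi v j"
  shows "\<exists>pi. bij_betw pi ({1..q}-{xi v j}) ({1..q}-{xi' v j}) \<and>
     (\<forall>d\<in>{1..q}. simc N F q i (xi(u:=(xi u)(j:=d))) (xi'(u:=(xi' u)(j:=pi d))))"
proof -
  have uv: "u \<le> N" "v \<le> N" "u \<noteq> v" using pp_facts[OF p] by auto
  have xc: "xi \<in> configs N F q" and xc': "xi' \<in> configs N F q" using s by (auto simp: simc_def)
  have oth: "\<And>a b. b \<noteq> i \<Longrightarrow> xi a b = xi' a b" using s by (auto simp: simc_def)
  have pat: "\<And>a b. (a,b) \<in> path_pairs N \<Longrightarrow> (xi a i = xi b i \<longleftrightarrow> xi' a i = xi' b i)"
    using s by (auto simp: simc_def)
  show ?thesis
  proof (cases "j = i")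
    case False
    have "xi v j = xi' v j" using oth False by auto
    moreover have "\<forall>d\<in>{1..q}. simc N F q i (xi(u:=(xi u)(j:=d))) (xi'(u:=(xi' u)(j:=id d)))"
    proof
      fix d :: nat assume d: "d \<in> {1..q}"
      show "simc N F q i (xi(u:=(xi u)(j:=d))) (xi'(u:=(xi' u)(j:=id d)))"
        unfolding simc_def
        using configs_upd[OF xc uv(1), of j d] configs_upd[OF xc' uv(1), of j d] j d False oth pat
        by auto
    qed
    ultimately show ?thesis by (intro exI[of _ id]) (auto simp: bij_betw_def)
  next
    case True
    hence ji: "j = i" .
    define a where "a = xi u i"
    define a' where "a' = xi' u i"
    define w where "w = (if v = u + 1 then u - 1 else u + 1)"
    define b where "b = sw a a' (xi w i)"
    define b' where "b' = xi' w i"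
    define pi where "pi = sw b b' \<circ> sw a a'"
    have iF: "1 \<le> i" "i \<le> F" using j ji by auto
    have aq: "a \<in> {1..q}" "a' \<in> {1..q}" using configs_val[OF xc uv(1) iF] configs_val[OF xc' uv(1) iF]
      by (auto simp: a_def a'_def)
    have nb: "\<And>n. (u,n) \<in> path_pairs N \<Longrightarrow> n = v \<or> n = w"
      using p by (auto simp: path_pairs_def w_def)
    have wcases: "(w \<le> N \<and> (u,w) \<in> path_pairs N) \<or> w = u \<or> w = N + 1"
      using p by (auto simp: path_pairs_def w_def)
    have bq: "(b \<in> {1..q} \<and> b' \<in> {1..q}) \<or> (b = b')"
    proof -
      from wcases show ?thesis
      proof (elim disjE conjE)
        assume "w \<le> N" "(u,w) \<in> path_pairs N"
        thus ?thesis using configs_val[OF xc _ iF, of w] configs_val[OF xc' _ iF, of w] aq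
          by (auto simp: b_def b'_def sw_def)
      next
        assume "w = u" thus ?thesis by (simp add: b_def b'_def a_def a'_def sw_def)
      next
        assume "w = N + 1"
        hence "xi w i = 0" "xi' w i = 0" using configs_out[OF xc] configs_out[OF xc'] by auto
        thus ?thesis using aq by (auto simp: b_def b'_def sw_def)
      qed
    qed
    have pinj: "inj pi" unfolding pi_def by (intro inj_compose sw_inj)
    have prange: "\<And>d. d \<in> {1..q} \<Longrightarrow> pi d \<in> {1..q}"
      using bq aq by (auto simp: pi_def sw_def)
    have pw0: "pi (xi w i) = sw b b' b" unfolding pi_def b_def by simp
    have pw: "pi (xi w i) = xi' w i" using pw0 by (simp add: b'_def sw_def)
    have pu: "pi a = a'"
    proof (cases "xi w i = a")
      case True
      have "b' = a'"
        using wcases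
      proof (elim disjE conjE)
        assume "w \<le> N" "(u,w) \<in> path_pairs N"
        thus ?thesis using pat[of u w] True by (simp add: a_def a'_def b'_def)
      next
        assume "w = u" thus ?thesis by (simp add: a'_def b'_def)
      next
        assume "w = N + 1"
        hence "xi w i = 0" using configs_out[OF xc] by auto
        thus ?thesis using True aq by auto
      qed
      moreover have "b = a'" using True by (simp add: b_def sw_def)
      ultimately show ?thesis by (simp add: pi_def sw_def)
    next
      case False
      have "b \<noteq> a'" using False sw_inj[of a a'] unfolding b_def
        by (metis injD sw_def)
      moreover have "b' \<noteq> a'"
        using wcases
      proof (elim disjE conjE)
        assume "w \<le> N" "(u,w) \<in> path_pairs N"
        thus ?thesis using pat[of u w] False by (simp add: a_def a'_def b'_def)
      next
        assume "w = u" thus ?thesis using False by (simp add: a_def)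
      next
        assume "w = N + 1"
        hence "xi' w i = 0" using configs_out[OF xc'] by auto
        thus ?thesis using aq by (auto simp: b'_def)
      qed
      ultimately show ?thesis by (simp add: pi_def sw_def)
    qed
    have pv: "pi (xi v i) = xi' v i"
      using pu e ji pat[OF p] by (simp add: a_def a'_def)
    have pn: "\<And>n. (u,n) \<in> path_pairs N \<Longrightarrow> pi (xi n i) = xi' n i"
      using nb pv pw by blast
    have pn2: "\<And>n. (n,u) \<in> path_pairs N \<Longrightarrow> pi (xi n i) = xi' n i"
      using pn by (auto simp: path_pairs_def)
    have "bij_betw pi ({1..q}-{xi v j}) ({1..q}-{xi' v j})"
      using perm_bij[OF pinj prange pv] ji by simp
    moreover have "\<forall>d\<in>{1..q}. simc N F q i (xi(u:=(xi u)(j:=d))) (xi'(u:=(xi' u)(j:=pi d)))"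
    proof
      fix d :: nat assume d: "d \<in> {1..q}"
      have c1: "xi(u:=(xi u)(j:=d)) \<in> configs N F q" using configs_upd[OF xc uv(1), of j d] j d by auto
      have c2: "xi'(u:=(xi' u)(j:=pi d)) \<in> configs N F q" using configs_upd[OF xc' uv(1), of j "pi d"] j prange d by auto
      have o2: "\<forall>a b. b \<noteq> i \<longrightarrow> (xi(u:=(xi u)(j:=d))) a b = (xi'(u:=(xi' u)(j:=pi d))) a b"
        using oth ji by auto
      have p2: "\<forall>a b. (a,b) \<in> path_pairs N \<longrightarrow> ((xi(u:=(xi u)(j:=d))) a i = (xi(u:=(xi u)(j:=d))) b i
                   \<longleftrightarrow> (xi'(u:=(xi' u)(j:=pi d))) a i = (xi'(u:=(xi' u)(j:=pi d))) b i)"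
      proof (intro allI impI)
        fix a0 b0 assume ab: "(a0,b0) \<in> path_pairs N"
        have ne: "a0 \<noteq> b0" using pp_facts[OF ab] by auto
        show "(xi(u:=(xi u)(j:=d))) a0 i = (xi(u:=(xi u)(j:=d))) b0 i
                   \<longleftrightarrow> (xi'(u:=(xi' u)(j:=pi d))) a0 i = (xi'(u:=(xi' u)(j:=pi d))) b0 i"
        proof (cases "a0 = u")
          case True
          hence "b0 \<noteq> u" using ne by auto
          moreover have "pi (xi b0 i) = xi' b0 i" using pn ab True by auto
          ultimately show ?thesis using True ji injD[OF pinj] by (auto)
        next
          case False
          show ?thesis
          proof (cases "b0 = u")
            case True
            have "pi (xi a0 i) = xi' a0 i" using pn2 ab True by auto
            thus ?thesis using True False ji injD[OF pinj] by auto
          next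
            case False2: False
            thus ?thesis using False pat[OF ab] by auto
          qed
        qed
      qed
      show "simc N F q i (xi(u:=(xi u)(j:=d))) (xi'(u:=(xi' u)(j:=pi d)))"
        unfolding simc_def using c1 c2 o2 p2 by blast
    qed
    ultimately show ?thesis by blast
  qed
qed



lemma T_inv:
  assumes finv: "\<And>z z'. simc N F q i z z' \<Longrightarrow> f z = f z'" and s: "simc N F q i xi xi'"
  shows "(\<Sum>z\<in>configs N F q. f z * axelrod_gen N F z xi) = (\<Sum>z\<in>configs N F q. f z * axelrod_gen N F z xi')"
proof -
  have xc: "xi \<in> configs N F q" and xc': "xi' \<in> configs N F q" using s by (auto simp: simc_def)
  show ?thesis
    unfolding T_expand
  proof (rule sum.cong[OF refl], clarify, rule sum.cong[OF refl])
    fix u v j assume p: "(u,v) \<in> path_pairs N" and j: "j \<in> {1..F}"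
    define g where "g z = f z * wt F z u v" for z
    have A: "(if j \<in> diff_feats F xi u v then f xi * wt F xi u v else 0)
           = (if j \<in> diff_feats F xi' u v then f xi' * wt F xi' u v else 0)"
      using simc_agree[OF s p] wt_agree[OF s p] finv[OF s] by simp
    have B: "(if xi u j = xi v j then (\<Sum>d\<in>{1..q}-{xi v j}. g (xi(u := (xi u)(j := d)))) else 0)
           = (if xi' u j = xi' v j then (\<Sum>d\<in>{1..q}-{xi' v j}. g (xi'(u := (xi' u)(j := d)))) else 0)"
    proof (cases "xi u j = xi v j")
      case True
      hence T': "xi' u j = xi' v j" using simc_eq_iff[OF s p] by simp
      obtain pi where bij: "bij_betw pi ({1..q}-{xi v j}) ({1..q}-{xi' v j})"
        and sm: "\<forall>d\<in>{1..q}. simc N F q i (xi(u:=(xi u)(j:=d))) (xi'(u:=(xi' u)(j:=pi d)))"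
        using pi_exists[OF s p j True] by blast
      have "(\<Sum>d\<in>{1..q}-{xi v j}. g (xi(u := (xi u)(j := d))))
          = (\<Sum>d\<in>{1..q}-{xi v j}. g (xi'(u := (xi' u)(j := pi d))))"
      proof (rule sum.cong[OF refl])
        fix d assume "d \<in> {1..q}-{xi v j}"
        hence ss: "simc N F q i (xi(u:=(xi u)(j:=d))) (xi'(u:=(xi' u)(j:=pi d)))" using sm by auto
        show "g (xi(u := (xi u)(j := d))) = g (xi'(u := (xi' u)(j := pi d)))"
          unfolding g_def using finv[OF ss] wt_agree[OF ss p] by simp
      qed
      also have "\<dots> = (\<Sum>d\<in>{1..q}-{xi' v j}. g (xi'(u := (xi' u)(j := d))))"
        by (rule sum.reindex_bij_betw[OF bij])
      finally show ?thesis using True T' by simp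
    next
      case False
      hence "xi' u j \<noteq> xi' v j" using simc_eq_iff[OF s p] by simp
      thus ?thesis using False by simp
    qed
    show "(\<Sum>z\<in>configs N F q. f z *
      (if j \<in> diff_feats F z u v then wt F z u v *
        ((if z(u := (z u)(j := z v j)) = xi then 1 else 0) - (if z = xi then 1 else 0)) else 0))
      = (\<Sum>z\<in>configs N F q. f z *
      (if j \<in> diff_feats F z u v then wt F z u v *
        ((if z(u := (z u)(j := z v j)) = xi' then 1 else 0) - (if z = xi' then 1 else 0)) else 0))"
      unfolding inner_split[OF xc] inner_split[OF xc'] charW[OF xc p j] charW[OF xc' p j]
      using A B unfolding g_def by simp
  qed
qed



definition Ssum :: "nat \<Rightarrow> nat \<Rightarrow> nat \<Rightarrow> nat \<Rightarrow> config \<Rightarrow> real" where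
  "Ssum N F q n xi = (\<Sum>eta\<in>configs N F q. gen_pow N F q n eta xi)"

lemma Ssum_Suc: "Ssum N F q (Suc n) xi = (\<Sum>z\<in>configs N F q. Ssum N F q n z * axelrod_gen N F z xi)"
  unfolding Ssum_def gen_pow.simps sum_distrib_right by (rule sum.swap)

lemma Ssum_inv: "simc N F q i xi xi' \<Longrightarrow> Ssum N F q n xi = Ssum N F q n xi'"
proof (induction n arbitrary: xi xi')
  case 0
  hence "xi \<in> configs N F q" "xi' \<in> configs N F q" by (auto simp: simc_def)
  thus ?case using configs_finite unfolding Ssum_def by (simp add: sum.delta')
next
  case (Suc n)
  show ?case unfolding Ssum_Suc by (rule T_inv[OF Suc.IH Suc.prems])
qed

definition Qmax :: "nat \<Rightarrow> nat \<Rightarrow> nat \<Rightarrow> real" where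
  "Qmax N F q = Max (insert 0 ((\<lambda>(a,b). \<bar>axelrod_gen N F a b\<bar>) ` (configs N F q \<times> configs N F q)))"

lemma Qmax_ge: "a \<in> configs N F q \<Longrightarrow> b \<in> configs N F q \<Longrightarrow> \<bar>axelrod_gen N F a b\<bar> \<le> Qmax N F q"
  unfolding Qmax_def by (rule Max_ge) (auto simp: configs_finite)

lemma Qmax_nonneg: "0 \<le> Qmax N F q"
  unfolding Qmax_def by (rule Max_ge) (auto simp: configs_finite)

definition Kb :: "nat \<Rightarrow> nat \<Rightarrow> nat \<Rightarrow> real" where
  "Kb N F q = real (card (configs N F q)) * Qmax N F q"

lemma Kb_nonneg: "0 \<le> Kb N F q" unfolding Kb_def using Qmax_nonneg by simp

lemma gen_pow_bound: "xi \<in> configs N F q \<Longrightarrow> \<bar>gen_pow N F q n eta xi\<bar> \<le> Kb N F q ^ n"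
proof (induction n arbitrary: xi)
  case 0 thus ?case by simp
next
  case (Suc n)
  have "\<bar>gen_pow N F q (Suc n) eta xi\<bar> \<le> (\<Sum>z\<in>configs N F q. \<bar>gen_pow N F q n eta z * axelrod_gen N F z xi\<bar>)"
    by (simp add: sum_abs)
  also have "\<dots> \<le> (\<Sum>z\<in>configs N F q. Kb N F q ^ n * Qmax N F q)"
  proof (rule sum_mono)
    fix z assume z: "z \<in> configs N F q"
    show "\<bar>gen_pow N F q n eta z * axelrod_gen N F z xi\<bar> \<le> Kb N F q ^ n * Qmax N F q"
      unfolding abs_mult
      by (rule mult_mono[OF Suc.IH[OF z] Qmax_ge[OF z Suc.prems]]) (auto simp: Kb_nonneg)
  qed
  also have "\<dots> = Kb N F q ^ Suc n" by (simp add: Kb_def)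
  finally show ?case .
qed

lemma gen_pow_summable:
  assumes "xi \<in> configs N F q"
  shows "summable (\<lambda>n. \<bar>t ^ n / fact n * gen_pow N F q n eta xi\<bar>)"
proof (rule summable_comparison_test)
  show "\<exists>N0. \<forall>n\<ge>N0. norm \<bar>t ^ n / fact n * gen_pow N F q n eta xi\<bar> \<le> inverse (fact n) * (\<bar>t\<bar> * Kb N F q) ^ n"
  proof (intro exI allI impI)
    fix n :: nat
    have "\<bar>t ^ n / fact n * gen_pow N F q n eta xi\<bar> = \<bar>t\<bar> ^ n / fact n * \<bar>gen_pow N F q n eta xi\<bar>"
      by (simp add: abs_mult power_abs)
    also have "\<dots> \<le> \<bar>t\<bar> ^ n / fact n * Kb N F q ^ n"
      by (rule mult_left_mono[OF gen_pow_bound[OF assms]]) auto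
    also have "\<dots> = inverse (fact n) * (\<bar>t\<bar> * Kb N F q) ^ n" by (simp add: power_mult_distrib field_simps)
    finally show "norm \<bar>t ^ n / fact n * gen_pow N F q n eta xi\<bar> \<le> inverse (fact n) * (\<bar>t\<bar> * Kb N F q) ^ n" by simp
  qed
  show "summable (\<lambda>n. inverse (fact n) * (\<bar>t\<bar> * Kb N F q) ^ n)" by (rule summable_exp)
qed

lemma law_expr:
  assumes "xi \<in> configs N F q"
  shows "law_at N F q t xi = (1 / real (card (configs N F q))) * (\<Sum>n. t ^ n / fact n * Ssum N F q n xi)"
proof -
  have sm: "\<And>eta. summable (\<lambda>n. t ^ n / fact n * gen_pow N F q n eta xi)"
    by (rule summable_rabs_cancel[OF gen_pow_summable[OF assms]])
  have "law_at N F q t xi = (1 / real (card (configs N F q))) * (\<Sum>eta\<in>configs N F q. trans_prob N F q t eta xi)"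
    unfolding law_at_def by (rule sum_distrib_left[symmetric])
  also have "(\<Sum>eta\<in>configs N F q. trans_prob N F q t eta xi) = (\<Sum>n. \<Sum>eta\<in>configs N F q. t ^ n / fact n * gen_pow N F q n eta xi)"
    unfolding trans_prob_def by (rule suminf_sum[symmetric]) (rule sm)
  also have "\<dots> = (\<Sum>n. t ^ n / fact n * Ssum N F q n xi)"
    unfolding Ssum_def by (simp only: sum_distrib_left)
  finally show ?thesis .
qed

lemma law_inv:
  assumes s: "simc N F q i xi xi'"
  shows "law_at N F q t xi = law_at N F q t xi'"
proof -
  have "xi \<in> configs N F q" "xi' \<in> configs N F q" using s by (auto simp: simc_def)
  thus ?thesis using Ssum_inv[OF s] by (simp add: law_expr)
qed



lemma sw_sw[simp]: "sw a b (sw a b d) = d" by (auto simp: sw_def)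
lemma sw_fix: "d \<noteq> a \<Longrightarrow> d \<noteq> b \<Longrightarrow> sw a b d = d" by (auto simp: sw_def)
lemma sw_first[simp]: "sw a b a = b" by (auto simp: sw_def)
lemma sw_second[simp]: "sw a b b = a" by (auto simp: sw_def)

definition Gm :: "nat \<Rightarrow> nat \<Rightarrow> nat \<Rightarrow> config \<times> nat \<Rightarrow> config" where
  "Gm i x y = (\<lambda>(xi, c). \<lambda>v j. if y < v \<and> j = i then sw (xi x i) c (xi v i) else xi v j)"

definition Hm :: "nat \<Rightarrow> nat \<Rightarrow> nat \<Rightarrow> nat \<Rightarrow> config \<Rightarrow> config \<times> nat" where
  "Hm i x y z xi = ((\<lambda>v j. if y < v \<and> j = i then sw (xi x i) (xi z i) (xi v i) else xi v j), xi z i)"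

lemma count_lemma:
  assumes Linv: "\<And>xi xi'. simc N F q i xi xi' \<Longrightarrow> L xi = L xi'"
    and xy: "x < y" and yz: "y < z" and zN: "z \<le> N" and i1: "1 \<le> i" and iF: "i \<le> F"
  shows "(\<Sum>xi\<in>configs N F q \<inter> (Omega i x z \<inter> - (Omega i x y \<union> Omega i y z)). L xi) * (real q - 1)
       = (\<Sum>xi\<in>configs N F q \<inter> - (Omega i x y \<union> Omega i y z). L xi)"
proof -
  let ?C = "configs N F q"
  let ?AB = "?C \<inter> (Omega i x z \<inter> - (Omega i x y \<union> Omega i y z))"
  let ?B = "?C \<inter> - (Omega i x y \<union> Omega i y z)"
  let ?Sg = "Sigma ?AB (\<lambda>xi. {1..q} - {xi y i})"
  have yN: "y \<le> N" "x \<le> N" using yz zN xy by auto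
  have inC: "\<And>xi v. xi \<in> ?C \<Longrightarrow> v \<le> N \<Longrightarrow> xi v i \<in> {1..q}" using configs_val i1 iF by blast
  have outC: "\<And>xi v. xi \<in> ?C \<Longrightarrow> \<not> v \<le> N \<Longrightarrow> xi v i = 0" using configs_out by blast
  have Gconf: "\<And>xi c. xi \<in> ?C \<Longrightarrow> c \<in> {1..q} \<Longrightarrow> xi x i \<in> {1..q} \<Longrightarrow>
      (\<lambda>v j. if y < v \<and> j = i then sw (xi x i) c (xi v i) else xi v j) \<in> ?C"
  proof -
    fix xi c assume xc: "xi \<in> ?C" and c: "c \<in> {1..q}" and a: "xi x i \<in> {1..q}"
    show "(\<lambda>v j. if y < v \<and> j = i then sw (xi x i) c (xi v i) else xi v j) \<in> ?C"
      unfolding configs_def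
    proof (intro CollectI allI conjI impI)
      fix v j assume h: "v \<le> N \<and> 1 \<le> j \<and> j \<le> F"
      show "(if y < v \<and> j = i then sw (xi x i) c (xi v i) else xi v j) \<in> {1..q}"
        using inC[OF xc, of v] h configs_val[OF xc, of v j] a c by (auto simp: sw_def)
    next
      fix v j assume h: "\<not> (v \<le> N \<and> 1 \<le> j \<and> j \<le> F)"
      show "(if y < v \<and> j = i then sw (xi x i) c (xi v i) else xi v j) = 0"
      proof (cases "y < v \<and> j = i")
        case True
        hence "xi v i = 0" using h i1 iF outC[OF xc, of v] by auto
        thus ?thesis using True a c by (auto simp: sw_def)
      next
        case False thus ?thesis using configs_out[OF xc h] by (simp only: if_False)
      qed
    qed
  qed
  have bij: "bij_betw (Gm i x y) ?Sg ?B"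
  proof (rule bij_betw_byWitness[where f' = "Hm i x y z"])
    show "\<forall>a\<in>?Sg. Hm i x y z (Gm i x y a) = a"
      using xy yz by (auto simp: Gm_def Hm_def fun_eq_iff Omega_def)
    show "\<forall>a\<in>?B. Gm i x y (Hm i x y z a) = a"
      using xy yz by (auto simp: Gm_def Hm_def fun_eq_iff Omega_def)
    show "Gm i x y ` ?Sg \<subseteq> ?B"
    proof (rule image_subsetI)
      fix p assume p: "p \<in> ?Sg"
      obtain xi c where pe: "p = (xi, c)" by (cases p)
      have xi: "xi \<in> ?AB" and c: "c \<in> {1..q} - {xi y i}" using p pe by auto
      have xc: "xi \<in> ?C" using xi by auto
      have "Gm i x y (xi, c) \<in> ?C" unfolding Gm_def using Gconf[OF xc] c inC[OF xc yN(2)] by auto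
      moreover have "Gm i x y (xi, c) \<notin> Omega i x y \<union> Omega i y z"
        using xi c xy yz by (auto simp: Gm_def Omega_def)
      ultimately show "Gm i x y p \<in> ?B" using pe by auto
    qed
    show "Hm i x y z ` ?B \<subseteq> ?Sg"
    proof (rule image_subsetI)
      fix xi assume xi: "xi \<in> ?B"
      have xc: "xi \<in> ?C" using xi by auto
      have "fst (Hm i x y z xi) \<in> ?C" unfolding Hm_def using Gconf[OF xc] inC[OF xc] yN zN by auto
      moreover have "fst (Hm i x y z xi) \<in> Omega i x z \<inter> - (Omega i x y \<union> Omega i y z)"
        using xi xy yz by (auto simp: Hm_def Omega_def)
      moreover have "snd (Hm i x y z xi) \<in> {1..q} - {fst (Hm i x y z xi) y i}"
        using xi xy yz inC[OF xc zN] by (auto simp: Hm_def Omega_def)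
      ultimately show "Hm i x y z xi \<in> ?Sg" by (cases "Hm i x y z xi") auto
    qed
  qed
  have simG: "\<And>p. p \<in> ?Sg \<Longrightarrow> simc N F q i (fst p) (Gm i x y p)"
  proof -
    fix p assume p: "p \<in> ?Sg"
    obtain xi c where pe: "p = (xi, c)" by (cases p)
    have xi: "xi \<in> ?AB" and c: "c \<in> {1..q} - {xi y i}" using p pe by auto
    have xc: "xi \<in> ?C" using xi by auto
    have Gc: "Gm i x y (xi, c) \<in> ?C" using bij p pe unfolding bij_betw_def by auto
    have ay: "xi y i \<noteq> xi x i" using xi by (auto simp: Omega_def)
    have G_ge: "\<And>u. y \<le> u \<Longrightarrow> Gm i x y (xi, c) u i = sw (xi x i) c (xi u i)"
      using ay c by (auto simp: Gm_def sw_fix)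
    have G_le: "\<And>u. u \<le> y \<Longrightarrow> Gm i x y (xi, c) u i = xi u i"
      by (auto simp: Gm_def)
    show "simc N F q i (fst p) (Gm i x y p)"
      unfolding simc_def pe fst_conv
    proof (intro conjI allI impI)
      show "xi \<in> ?C" by (rule xc)
      show "Gm i x y (xi, c) \<in> ?C" by (rule Gc)
      fix v j assume "j \<noteq> i" thus "xi v j = Gm i x y (xi, c) v j" by (simp add: Gm_def)
    next
      fix u v assume uv: "(u, v) \<in> path_pairs N"
      show "(xi u i = xi v i) = (Gm i x y (xi, c) u i = Gm i x y (xi, c) v i)"
      proof (cases "y \<le> u \<and> y \<le> v")
        case True thus ?thesis using G_ge injD[OF sw_inj] by metis
      next
        case False
        hence "u \<le> y \<and> v \<le> y" using uv by (auto simp: path_pairs_def)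
        thus ?thesis using G_le by simp
      qed
    qed
  qed
  have "(\<Sum>xi\<in>?B. L xi) = (\<Sum>p\<in>?Sg. L (Gm i x y p))"
    by (rule sum.reindex_bij_betw[OF bij, symmetric])
  also have "\<dots> = (\<Sum>(xi,c)\<in>?Sg. L xi)"
  proof (rule sum.cong[OF refl])
    fix p assume "p \<in> ?Sg"
    hence "L (Gm i x y p) = L (fst p)" using simG Linv by metis
    thus "L (Gm i x y p) = (case p of (xi, c) \<Rightarrow> L xi)" by (cases p) simp
  qed
  also have "\<dots> = (\<Sum>xi\<in>?AB. \<Sum>c\<in>{1..q} - {xi y i}. L xi)"
    by (subst sum.Sigma) (auto simp: configs_finite)
  also have "\<dots> = (\<Sum>xi\<in>?AB. L xi * (real q - 1))"
  proof (rule sum.cong[OF refl])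
    fix xi assume xi: "xi \<in> ?AB"
    have "xi y i \<in> {1..q}" using xi inC yN by auto
    hence "card ({1..q} - {xi y i}) = q - 1" by simp
    moreover have "q \<ge> 1" using \<open>xi y i \<in> {1..q}\<close> by auto
    ultimately show "(\<Sum>c\<in>{1..q} - {xi y i}. L xi) = L xi * (real q - 1)" by (simp add: of_nat_diff)
  qed
  also have "\<dots> = (\<Sum>xi\<in>?AB. L xi) * (real q - 1)" by (simp add: sum_distrib_right)
  finally show ?thesis by simp
qed



lemma pascal_step:
  fixes a :: "nat \<Rightarrow> real"
  shows "(\<Sum>k\<le>n. real (n choose k) * r^(n-k) * (a (Suc k) + r * a k))
       = (\<Sum>k\<le>Suc n. real (Suc n choose k) * r^(Suc n - k) * a k)"
proof -
  have e1: "(\<Sum>k\<le>Suc n. real (Suc n choose k) * r^(Suc n - k) * a k)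
      = r^(Suc n) * a 0 + (\<Sum>k\<le>n. real (n choose k) * r^(n-k) * a (Suc k))
          + (\<Sum>k\<le>n. real (n choose Suc k) * r^(n-k) * a (Suc k))"
    by (subst sum.atMost_Suc_shift) (simp add: ring_distribs sum.distrib)
  have e2: "r^(Suc n) * a 0 + (\<Sum>k\<le>n. real (n choose Suc k) * r^(n-k) * a (Suc k))
      = (\<Sum>k\<le>Suc n. real (n choose k) * r^(Suc n - k) * a k)"
    by (subst sum.atMost_Suc_shift[where n="n"]) simp
  have e3: "(\<Sum>k\<le>Suc n. real (n choose k) * r^(Suc n - k) * a k) = (\<Sum>k\<le>n. real (n choose k) * r^(Suc n - k) * a k)"
    by simp
  have e4: "(\<Sum>k\<le>n. real (n choose k) * r^(Suc n - k) * a k) = (\<Sum>k\<le>n. real (n choose k) * r^(n - k) * (r * a k))"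
    by (rule sum.cong[OF refl]) (simp add: Suc_diff_le)
  show ?thesis
    unfolding e1 using e2 e3 e4 by (simp add: ring_distribs sum.distrib)
qed

lemma Q_offdiag_nonneg: "a \<noteq> b \<Longrightarrow> 0 \<le> axelrod_gen N F a b"
  unfolding axelrod_gen_def
  by (intro sum_nonneg) (auto simp: similarity_def split: prod.splits intro!: sum_nonneg divide_nonneg_nonneg mult_nonneg_nonneg)

definition lam :: "nat \<Rightarrow> nat \<Rightarrow> nat \<Rightarrow> real" where "lam N F q = Qmax N F q"

definition Mm :: "nat \<Rightarrow> nat \<Rightarrow> nat \<Rightarrow> config \<Rightarrow> config \<Rightarrow> real" where
  "Mm N F q a b = axelrod_gen N F a b + lam N F q * (if a = b then 1 else 0)"

fun Mp :: "nat \<Rightarrow> nat \<Rightarrow> nat \<Rightarrow> nat \<Rightarrow> config \<Rightarrow> config \<Rightarrow> real" where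
  "Mp N F q 0 eta xi = (if eta = xi then 1 else 0)"
| "Mp N F q (Suc n) eta xi = (\<Sum>z\<in>configs N F q. Mp N F q n eta z * Mm N F q z xi)"

lemma Mm_nonneg: "a \<in> configs N F q \<Longrightarrow> b \<in> configs N F q \<Longrightarrow> 0 \<le> Mm N F q a b"
proof (cases "a = b")
  case True
  assume "a \<in> configs N F q"
  hence "\<bar>axelrod_gen N F a a\<bar> \<le> lam N F q" using Qmax_ge by (simp add: lam_def)
  thus ?thesis using True by (simp add: Mm_def)
next
  case False thus ?thesis using Q_offdiag_nonneg[OF False] by (simp add: Mm_def)
qed

lemma Mm_bound: "a \<in> configs N F q \<Longrightarrow> b \<in> configs N F q \<Longrightarrow> \<bar>Mm N F q a b\<bar> \<le> 2 * Qmax N F q"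
  using Qmax_ge[of a N F q b] Qmax_nonneg[of N F q] by (auto simp: Mm_def lam_def)

lemma Mp_nonneg: "xi \<in> configs N F q \<Longrightarrow> 0 \<le> Mp N F q n eta xi"
  by (induction n arbitrary: xi) (auto intro!: sum_nonneg mult_nonneg_nonneg Mm_nonneg)

lemma Mp_bound: "xi \<in> configs N F q \<Longrightarrow> \<bar>Mp N F q n eta xi\<bar> \<le> (2 * Kb N F q) ^ n"
proof (induction n arbitrary: xi)
  case 0 thus ?case by simp
next
  case (Suc n)
  have "\<bar>Mp N F q (Suc n) eta xi\<bar> \<le> (\<Sum>z\<in>configs N F q. \<bar>Mp N F q n eta z * Mm N F q z xi\<bar>)"
    by (simp add: sum_abs)
  also have "\<dots> \<le> (\<Sum>z\<in>configs N F q. (2 * Kb N F q) ^ n * (2 * Qmax N F q))"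
  proof (rule sum_mono)
    fix z assume z: "z \<in> configs N F q"
    show "\<bar>Mp N F q n eta z * Mm N F q z xi\<bar> \<le> (2 * Kb N F q) ^ n * (2 * Qmax N F q)"
      unfolding abs_mult
      by (rule mult_mono[OF Suc.IH[OF z] Mm_bound[OF z Suc.prems]]) (auto simp: Kb_nonneg)
  qed
  also have "\<dots> = (2 * Kb N F q) ^ Suc n" by (simp add: Kb_def)
  finally show ?case .
qed

lemma QM_row: "xi \<in> configs N F q \<Longrightarrow>
   (\<Sum>z\<in>configs N F q. Mp N F q k eta z * axelrod_gen N F z xi)
     = Mp N F q (Suc k) eta xi + (- lam N F q) * Mp N F q k eta xi"
proof -
  assume xc: "xi \<in> configs N F q"
  have "(\<Sum>z\<in>configs N F q. Mp N F q k eta z * axelrod_gen N F z xi)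
     = (\<Sum>z\<in>configs N F q. Mp N F q k eta z * Mm N F q z xi - (if z = xi then lam N F q * Mp N F q k eta z else 0))"
    by (rule sum.cong[OF refl]) (auto simp: Mm_def algebra_simps)
  also have "\<dots> = Mp N F q (Suc k) eta xi - lam N F q * Mp N F q k eta xi"
    using xc configs_finite by (simp add: sum_subtractf sum.delta')
  finally show ?thesis by simp
qed

lemma gen_pow_binom: "xi \<in> configs N F q \<Longrightarrow>
   gen_pow N F q n eta xi = (\<Sum>k\<le>n. real (n choose k) * (- lam N F q)^(n-k) * Mp N F q k eta xi)"
proof (induction n arbitrary: xi)
  case 0 thus ?case by simp
next
  case (Suc n)
  have "gen_pow N F q (Suc n) eta xi
      = (\<Sum>z\<in>configs N F q. (\<Sum>k\<le>n. real (n choose k) * (- lam N F q)^(n-k) * Mp N F q k eta z) * axelrod_gen N F z xi)"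
    by (simp add: Suc.IH)
  also have "\<dots> = (\<Sum>k\<le>n. real (n choose k) * (- lam N F q)^(n-k) *
                     (\<Sum>z\<in>configs N F q. Mp N F q k eta z * axelrod_gen N F z xi))"
    by (simp add: sum_distrib_right sum_distrib_left mult.assoc) (rule sum.swap)
  also have "\<dots> = (\<Sum>k\<le>n. real (n choose k) * (- lam N F q)^(n-k) *
                     (Mp N F q (Suc k) eta xi + (- lam N F q) * Mp N F q k eta xi))"
    by (simp add: QM_row[OF Suc.prems])
  also have "\<dots> = (\<Sum>k\<le>Suc n. real (Suc n choose k) * (- lam N F q)^(Suc n - k) * Mp N F q k eta xi)"
    by (rule pascal_step)
  finally show ?case .
qed



lemma exp_sums_real: "(\<lambda>n. x^n / fact n) sums exp (x::real)"
  using exp_converges[of x] by (simp add: divide_inverse mult.commute)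

lemma trans_factor:
  assumes xc: "xi \<in> configs N F q"
  shows "trans_prob N F q t eta xi = (\<Sum>k. t^k / fact k * Mp N F q k eta xi) * exp (- lam N F q * t)"
proof -
  define a where "a k = t^k / fact k * Mp N F q k eta xi" for k
  define b where "b l = (- lam N F q * t)^l / fact l" for l
  have sa: "summable (\<lambda>k. norm (a k))"
  proof (rule summable_comparison_test)
    show "\<exists>N0. \<forall>n\<ge>N0. norm (norm (a n)) \<le> inverse (fact n) * (\<bar>t\<bar> * (2 * Kb N F q)) ^ n"
    proof (intro exI allI impI)
      fix n :: nat
      have "norm (norm (a n)) = \<bar>t\<bar> ^ n / fact n * \<bar>Mp N F q n eta xi\<bar>"
        by (simp add: a_def abs_mult power_abs)
      also have "\<dots> \<le> \<bar>t\<bar> ^ n / fact n * (2 * Kb N F q) ^ n"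
        by (rule mult_left_mono[OF Mp_bound[OF xc]]) auto
      also have "\<dots> = inverse (fact n) * (\<bar>t\<bar> * (2 * Kb N F q)) ^ n" by (simp add: power_mult_distrib field_simps)
      finally show "norm (norm (a n)) \<le> inverse (fact n) * (\<bar>t\<bar> * (2 * Kb N F q)) ^ n" .
    qed
    show "summable (\<lambda>n. inverse (fact n) * (\<bar>t\<bar> * (2 * Kb N F q)) ^ n)" by (rule summable_exp)
  qed
  have sb: "summable (\<lambda>k. norm (b k))"
  proof -
    have "(\<lambda>k. norm (b k)) = (\<lambda>k. inverse (fact k) * \<bar>- lam N F q * t\<bar> ^ k)"
      by (simp add: b_def abs_mult power_abs field_simps fun_eq_iff)
    thus ?thesis using summable_exp by simp
  qed
  have eb: "(\<Sum>l. b l) = exp (- lam N F q * t)"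
    unfolding b_def by (rule sums_unique[OF exp_sums_real, symmetric])
  have inner: "(\<Sum>i\<le>n. a i * b (n - i)) = t ^ n / fact n * gen_pow N F q n eta xi" for n
  proof -
    have "t ^ n / fact n * gen_pow N F q n eta xi
        = (\<Sum>i\<le>n. t ^ n / fact n * (real (n choose i) * (- lam N F q)^(n-i) * Mp N F q i eta xi))"
      by (simp add: gen_pow_binom[OF xc] sum_distrib_left)
    also have "\<dots> = (\<Sum>i\<le>n. a i * b (n - i))"
    proof (rule sum.cong[OF refl])
      fix i assume "i \<in> {..n}"
      hence i: "i \<le> n" by simp
      have tn: "t ^ n = t ^ i * t ^ (n - i)" using i by (simp flip: power_add)
      have pm: "(- lam N F q * t)^(n-i) = (- lam N F q)^(n-i) * t^(n-i)" by (rule power_mult_distrib)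
      show "t ^ n / fact n * (real (n choose i) * (- lam N F q)^(n-i) * Mp N F q i eta xi) = a i * b (n - i)"
        unfolding a_def b_def binomial_fact[OF i] tn pm
        by (simp add: field_simps)
    qed
    finally show ?thesis by simp
  qed
  have "(\<Sum>k. a k) * (\<Sum>l. b l) = (\<Sum>n. \<Sum>i\<le>n. a i * b (n - i))"
    by (rule Cauchy_product[OF sa sb])
  also have "\<dots> = trans_prob N F q t eta xi"
    unfolding inner trans_prob_def ..
  finally show ?thesis using eb by (simp add: a_def)
qed

lemma trans_nonneg:
  assumes xc: "xi \<in> configs N F q" and t: "0 \<le> t"
  shows "0 \<le> trans_prob N F q t eta xi"
proof -
  have sm: "summable (\<lambda>k. t^k / fact k * Mp N F q k eta xi)"
  proof -
    have "summable (\<lambda>n. \<bar>t ^ n / fact n * gen_pow N F q n eta xi\<bar>)" by (rule gen_pow_summable[OF xc])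
    show ?thesis
    proof (rule summable_comparison_test)
      show "\<exists>N0. \<forall>n\<ge>N0. norm (t^n / fact n * Mp N F q n eta xi) \<le> inverse (fact n) * (\<bar>t\<bar> * (2 * Kb N F q)) ^ n"
      proof (intro exI allI impI)
        fix n :: nat
        have "norm (t^n / fact n * Mp N F q n eta xi) = \<bar>t\<bar> ^ n / fact n * \<bar>Mp N F q n eta xi\<bar>"
          by (simp add: abs_mult power_abs)
        also have "\<dots> \<le> \<bar>t\<bar> ^ n / fact n * (2 * Kb N F q) ^ n"
          by (rule mult_left_mono[OF Mp_bound[OF xc]]) auto
        also have "\<dots> = inverse (fact n) * (\<bar>t\<bar> * (2 * Kb N F q)) ^ n" by (simp add: power_mult_distrib field_simps)
        finally show "norm (t^n / fact n * Mp N F q n eta xi) \<le> inverse (fact n) * (\<bar>t\<bar> * (2 * Kb N F q)) ^ n" .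
      qed
      show "summable (\<lambda>n. inverse (fact n) * (\<bar>t\<bar> * (2 * Kb N F q)) ^ n)" by (rule summable_exp)
    qed
  qed
  have "0 \<le> (\<Sum>k. t^k / fact k * Mp N F q k eta xi)"
    by (rule suminf_nonneg[OF sm]) (intro mult_nonneg_nonneg divide_nonneg_nonneg zero_le_power t Mp_nonneg[OF xc]; simp)
  thus ?thesis unfolding trans_factor[OF xc] by simp
qed

lemma trans_diag_pos:
  assumes xc: "xi \<in> configs N F q" and t: "0 \<le> t"
  shows "0 < trans_prob N F q t xi xi"
proof -
  have sm: "summable (\<lambda>k. t^k / fact k * Mp N F q k xi xi)"
  proof (rule summable_comparison_test)
    show "\<exists>N0. \<forall>n\<ge>N0. norm (t^n / fact n * Mp N F q n xi xi) \<le> inverse (fact n) * (\<bar>t\<bar> * (2 * Kb N F q)) ^ n"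
    proof (intro exI allI impI)
      fix n :: nat
      have "norm (t^n / fact n * Mp N F q n xi xi) = \<bar>t\<bar> ^ n / fact n * \<bar>Mp N F q n xi xi\<bar>"
        by (simp add: abs_mult power_abs)
      also have "\<dots> \<le> \<bar>t\<bar> ^ n / fact n * (2 * Kb N F q) ^ n"
        by (rule mult_left_mono[OF Mp_bound[OF xc]]) auto
      also have "\<dots> = inverse (fact n) * (\<bar>t\<bar> * (2 * Kb N F q)) ^ n" by (simp add: power_mult_distrib field_simps)
      finally show "norm (t^n / fact n * Mp N F q n xi xi) \<le> inverse (fact n) * (\<bar>t\<bar> * (2 * Kb N F q)) ^ n" .
    qed
    show "summable (\<lambda>n. inverse (fact n) * (\<bar>t\<bar> * (2 * Kb N F q)) ^ n)" by (rule summable_exp)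
  qed
  have "(\<Sum>k\<in>{0}. t^k / fact k * Mp N F q k xi xi) \<le> (\<Sum>k. t^k / fact k * Mp N F q k xi xi)"
    by (rule sum_le_suminf[OF sm]) (simp, intro mult_nonneg_nonneg divide_nonneg_nonneg zero_le_power t Mp_nonneg[OF xc], simp_all)
  hence "1 \<le> (\<Sum>k. t^k / fact k * Mp N F q k xi xi)" by simp
  thus ?thesis unfolding trans_factor[OF xc] by (simp add: mult_pos_pos)
qed

lemma law_pos:
  assumes xc: "xi \<in> configs N F q" and t: "0 \<le> t"
  shows "0 < law_at N F q t xi"
proof -
  have cpos: "0 < real (card (configs N F q))" using xc configs_finite card_gt_0_iff by fastforce
  have "(1 / real (card (configs N F q))) * trans_prob N F q t xi xi
        \<le> (\<Sum>eta\<in>configs N F q. (1 / real (card (configs N F q))) * trans_prob N F q t eta xi)"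
    by (rule member_le_sum[where f = "\<lambda>eta. (1 / real (card (configs N F q))) * trans_prob N F q t eta xi", OF xc])
       (auto intro!: divide_nonneg_nonneg trans_nonneg[OF xc t] simp: configs_finite)
  moreover have "0 < (1 / real (card (configs N F q))) * trans_prob N F q t xi xi"
    using cpos trans_diag_pos[OF xc t] by simp
  ultimately show ?thesis unfolding law_at_def by linarith
qed


theorem lemma9:
  fixes N F q x y z i :: nat and t :: real
  assumes "q \<ge> 2" and "t \<ge> 0"
    and "x < y" and "y < z" and "z \<le> N"
    and "1 \<le> i" and "i \<le> F"
  shows "cond_prob_at N F q t (Omega i x z) (- (Omega i x y \<union> Omega i y z))
           = 1 / (real q - 1)"
proof -
  let ?C = "configs N F q"
  let ?B = "- (Omega i x y \<union> Omega i y z)"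
  let ?A = "Omega i x z"
  have cnt: "prob_at N F q t (?A \<inter> ?B) * (real q - 1) = prob_at N F q t ?B"
    unfolding prob_at_def
    by (rule count_lemma[OF law_inv assms(3-7)])
  define xi0 :: config where "xi0 = (\<lambda>v j. if v \<le> N \<and> 1 \<le> j \<and> j \<le> F then (if v = y \<and> j = i then 2 else 1) else 0)"
  have x0c: "xi0 \<in> ?C" using assms(1) by (auto simp: xi0_def configs_def)
  have x0B: "xi0 \<in> ?B" using assms by (auto simp: xi0_def Omega_def)
  have Bpos: "0 < prob_at N F q t ?B"
    unfolding prob_at_def
  proof (rule sum_pos)
    show "finite (?C \<inter> ?B)" using configs_finite by auto
    show "?C \<inter> ?B \<noteq> {}" using x0c x0B by auto
    show "\<And>xi. xi \<in> ?C \<inter> ?B \<Longrightarrow> 0 < law_at N F q t xi" using law_pos assms(2) by auto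
  qed
  have q1: "real q - 1 > 0" using assms(1) by simp
  have "prob_at N F q t (?A \<inter> ?B) \<noteq> 0" using cnt Bpos by auto
  hence "prob_at N F q t (?A \<inter> ?B) / prob_at N F q t ?B = 1 / (real q - 1)"
    using q1 by (subst cnt[symmetric]) simp
  thus ?thesis unfolding cond_prob_at_def .
qed

end
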